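(* Let $f:X\to\mathcal G$ be a convex function, $x\in\operatorname{dom} f$ and $u\in X$. Then $$f'(x,u)=\operatorname{cl}\operatorname{co}\bigcup_{t>0}\tfrac1t\big(f(x+tu)\ominus f(x)\big),$$ $f'(x,0)=0^+f(x)$, and the function $u\mapsto f'(x,u)$ is sublinear as a function from $X$ to $\mathcal G(Z,0^+f(x))$; that is, $f'(x,su)=sf'(x,u)$ for all $s>0$, $u\in X$, and $f'(x,su_1+(1-s)u_2)\supseteq sf'(x,u_1)\oplus(1-s)f'(x,u_2)$ for all $u_1,u_2\in X$, $s\in(0,1)$.
   Context: $X$ is a real linear space, $Z$ a real locally convex Hausdorff space, $C\subseteq Z$ a closed convex cone with $0\in C$ and $C^-=\{z^*\in Z^*:z^*(c)\le0\ \forall c\in C\}\ne\{0\}$. For a closed convex cone $K$ with $0\in K$, $\mathcal G(Z,K)=\{A\subseteq Z: A=\operatorname{cl}\operatorname{co}(A+K)\}$; $\mathcal G=\mathcal G(Z,C)$. $A\oplus B=\operatorname{cl}\{a+b\}$, $tA=\{ta\}$ for $t>0$, $A\ominus B=\{z: B+\{z\}\subseteq A\}$. $0^+A=\{z: A+\{z\}\subseteq A\}$ for $A\neq\emptyset$. $f$ convex: $f(tx_1+(1-t)x_2)\supseteq tf(x_1)\oplus(1-t)f(x_2)$; $\operatorname{dom}f=\{x: f(x)\ne\emptyset\}$. $f'(x,u)=\bigcap_{t_0>0}\operatorname{cl}\operatorname{co}\bigcup_{0<t<t_0}\frac1t\big(f(x+tu)\ominus f(x)\big)$. *)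

theory Defs
  imports "HOL-Analysis.Analysis"
begin

class lc_tvs = real_vector + t2_space +
  assumes add_continuous: "\<And>U a b. open U \<Longrightarrow> a + b \<in> U \<Longrightarrow>
      \<exists>V W. open V \<and> open W \<and> a \<in> V \<and> b \<in> W \<and> (\<forall>v\<in>V. \<forall>w\<in>W. v + w \<in> U)"
    and scaleR_continuous: "\<And>U r a. open U \<Longrightarrow> r *\<^sub>R a \<in> U \<Longrightarrow>
      \<exists>e>0. \<exists>W. open W \<and> a \<in> W \<and> (\<forall>s. \<bar>s - r\<bar> < e \<longrightarrow> (\<forall>w\<in>W. s *\<^sub>R w \<in> U))"
    and locally_convex: "\<And>U x. open U \<Longrightarrow> x \<in> U \<Longrightarrow> \<exists>V. open V \<and> (\<forall>y\<in>V. \<forall>z\<in>V. \<forall>t::real. 0 \<le> t \<and> t \<le> 1 \<longrightarrow> t *\<^sub>R y + (1 - t) *\<^sub>R z \<in> V) \<and> x \<in> V \<and> V \<subseteq> U"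

definition topdual :: "('z::lc_tvs \<Rightarrow> real) set" where
  "topdual = {\<phi>. linear \<phi> \<and> continuous_on UNIV \<phi>}"

definition neg_dual_cone :: "'z::lc_tvs set \<Rightarrow> ('z \<Rightarrow> real) set" where
  "neg_dual_cone C = {\<phi> \<in> topdual. \<forall>c\<in>C. \<phi> c \<le> 0}"

definition Gspace :: "'z::lc_tvs set \<Rightarrow> 'z set set" where
  "Gspace K = {A. A = closure (convex hull {a + k | a k. a \<in> A \<and> k \<in> K})}"

definition oplus :: "'z::lc_tvs set \<Rightarrow> 'z set \<Rightarrow> 'z set" (infixl "\<oplus>\<^sub>G" 65) where
  "A \<oplus>\<^sub>G B = closure {a + b | a b. a \<in> A \<and> b \<in> B}"

definition sscale :: "real \<Rightarrow> 'z::real_vector set \<Rightarrow> 'z set" where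
  "sscale t A = (\<lambda>a. t *\<^sub>R a) ` A"

definition ominus :: "'z::real_vector set \<Rightarrow> 'z set \<Rightarrow> 'z set" (infixl "\<ominus>\<^sub>G" 65) where
  "A \<ominus>\<^sub>G B = {z. \<forall>b\<in>B. b + z \<in> A}"

text \<open>Recession cone 0^+A (used only for nonempty A).\<close>
definition recc :: "'z::real_vector set \<Rightarrow> 'z set" where
  "recc A = {z. \<forall>a\<in>A. a + z \<in> A}"

definition set_convex_fun :: "('x::real_vector \<Rightarrow> 'z::lc_tvs set) \<Rightarrow> bool" where
  "set_convex_fun f \<longleftrightarrow> (\<forall>x1 x2 t. 0 < t \<and> t < 1 \<longrightarrow>
      sscale t (f x1) \<oplus>\<^sub>G sscale (1 - t) (f x2) \<subseteq> f (t *\<^sub>R x1 + (1 - t) *\<^sub>R x2))"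

definition sdom :: "('x \<Rightarrow> 'z set) \<Rightarrow> 'x set" where
  "sdom f = {x. f x \<noteq> {}}"

definition dir_deriv :: "('x::real_vector \<Rightarrow> 'z::lc_tvs set) \<Rightarrow> 'x \<Rightarrow> 'x \<Rightarrow> 'z set" where
  "dir_deriv f x u = (\<Inter>t0\<in>{0<..}. closure (convex hull
      (\<Union>t\<in>{0<..<t0}. sscale (1 / t) (f (x + t *\<^sub>R u) \<ominus>\<^sub>G f x))))"

end

theory Submission
  imports Defs
begin

lemma closure_lin2:
  fixes A B :: "'z::lc_tvs set"
  assumes a: "a \<in> closure A" and b: "b \<in> closure B"
  shows "r *\<^sub>R a + s *\<^sub>R b \<in> closure {r *\<^sub>R a' + s *\<^sub>R b' | a' b'. a' \<in> A \<and> b' \<in> B}"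
  unfolding closure_iff_nhds_not_empty
proof (intro allI impI)
  fix U S assume SU: "S \<subseteq> U" and oS: "open S" and p: "r *\<^sub>R a + s *\<^sub>R b \<in> S"
  obtain V W where V: "open V" "open W" "r *\<^sub>R a \<in> V" "s *\<^sub>R b \<in> W" and VW: "\<forall>v\<in>V. \<forall>w\<in>W. v + w \<in> S"
    using add_continuous[OF oS p] by blast
  obtain e1 W1 where W1: "open W1" "a \<in> W1" "\<forall>w\<in>W1. r *\<^sub>R w \<in> V"
    using scaleR_continuous[OF V(1) V(3)] by fastforce
  obtain e2 W2 where W2: "open W2" "b \<in> W2" "\<forall>w\<in>W2. s *\<^sub>R w \<in> W"
    using scaleR_continuous[OF V(2) V(4)] by fastforce
  obtain a' where a': "a' \<in> A" "a' \<in> W1" using a W1 unfolding closure_iff_nhds_not_empty by blast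
  obtain b' where b': "b' \<in> B" "b' \<in> W2" using b W2 unfolding closure_iff_nhds_not_empty by blast
  have "r *\<^sub>R a' + s *\<^sub>R b' \<in> S" using VW W1 W2 a' b' by blast
  then show "{r *\<^sub>R a' + s *\<^sub>R b' | a' b'. a' \<in> A \<and> b' \<in> B} \<inter> U \<noteq> {}" using a' b' SU by blast
qed

lemma sscale_one[simp]: "sscale 1 A = A" by (simp add: sscale_def)

lemma closure_convex_tvs:
  fixes S :: "'z::lc_tvs set"
  assumes "convex S" shows "convex (closure S)"
proof (rule convexI)
  fix a b and u v :: real assume a: "a \<in> closure S" and b: "b \<in> closure S" and uv0: "0 \<le> u" "0 \<le> v" "u + v = 1"
  then have uv: "0 \<le> u \<and> 0 \<le> v \<and> u + v = 1" by simp
  have "{u *\<^sub>R a' + v *\<^sub>R b' | a' b'. a' \<in> S \<and> b' \<in> S} \<subseteq> S"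
    using assms uv unfolding convex_def by blast
  then have "closure {u *\<^sub>R a' + v *\<^sub>R b' | a' b'. a' \<in> S \<and> b' \<in> S} \<subseteq> closure S"
    by (rule closure_mono)
  then show "u *\<^sub>R a + v *\<^sub>R b \<in> closure S"
    using closure_lin2[OF a b, of u v] by blast
qed

lemma closure_translate_tvs:
  fixes A :: "'z::lc_tvs set"
  assumes "a \<in> closure A" shows "a + k \<in> closure {a' + k | a'. a' \<in> A}"
proof -
  have kk: "k \<in> closure {k}" by (simp add: closure_subset[THEN subsetD])
  have e: "{1 *\<^sub>R a' + 1 *\<^sub>R b' | a' b'. a' \<in> A \<and> b' \<in> {k}} = {a' + k | a'. a' \<in> A}" by auto
  from closure_lin2[OF assms kk, of 1 1] show ?thesis unfolding e by simp
qed

lemma closure_scale_sub: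
  fixes A :: "'z::lc_tvs set"
  shows "sscale r (closure A) \<subseteq> closure (sscale r A)"
proof
  fix y assume "y \<in> sscale r (closure A)"
  then obtain a where a: "a \<in> closure A" "y = r *\<^sub>R a" by (auto simp: sscale_def)
  have kk: "(0::'z) \<in> closure {0}" by (simp add: closure_subset[THEN subsetD])
  have e: "{r *\<^sub>R a' + 0 *\<^sub>R b' | a' b'. a' \<in> A \<and> b' \<in> {0::'z}} = sscale r A" by (auto simp: sscale_def)
  from closure_lin2[OF a(1) kk, of r 0] show "y \<in> closure (sscale r A)" using a unfolding e by simp
qed

lemma sscale_sscale: "s \<noteq> 0 \<Longrightarrow> sscale (1/s) (sscale s A) = A"
  by (auto simp: sscale_def image_image)

lemma sscale_sscale2: "sscale a (sscale b A) = sscale (a*b) A"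
  by (auto simp: sscale_def image_image)

lemma closure_scale_tvs:
  fixes A :: "'z::lc_tvs set"
  assumes "r \<noteq> 0"
  shows "sscale r (closure A) = closure (sscale r A)"
proof
  show "sscale r (closure A) \<subseteq> closure (sscale r A)" by (rule closure_scale_sub)
  have "sscale (1/r) (closure (sscale r A)) \<subseteq> closure A"
    using closure_scale_sub[of "1/r" "sscale r A"] unfolding sscale_sscale[OF assms] .
  then have "sscale r (sscale (1/r) (closure (sscale r A))) \<subseteq> sscale r (closure A)"
    by (auto simp: sscale_def)
  then show "closure (sscale r A) \<subseteq> sscale r (closure A)" using assms
    by (simp add: sscale_sscale2)
qed


lemma hull_sscale: "convex hull (sscale c S) = sscale c (convex hull S)"
  unfolding sscale_def by (rule convex_hull_scaling)

definition Qd :: "('x::real_vector \<Rightarrow> 'z::lc_tvs set) \<Rightarrow> 'x \<Rightarrow> real \<Rightarrow> 'x \<Rightarrow> 'z set" where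
  "Qd f x t u = sscale (1 / t) (f (x + t *\<^sub>R u) \<ominus>\<^sub>G f x)"

lemma convex_comb_in:
  assumes "set_convex_fun f" "0 < m" "m < 1" "a \<in> f y1" "b \<in> f y2"
  shows "m *\<^sub>R a + (1 - m) *\<^sub>R b \<in> f (m *\<^sub>R y1 + (1 - m) *\<^sub>R y2)"
proof -
  have "m *\<^sub>R a + (1 - m) *\<^sub>R b \<in> {a + b | a b. a \<in> sscale m (f y1) \<and> b \<in> sscale (1 - m) (f y2)}"
    using assms by (auto simp: sscale_def)
  also have "\<dots> \<subseteq> sscale m (f y1) \<oplus>\<^sub>G sscale (1 - m) (f y2)"
    unfolding oplus_def by (rule closure_subset)
  also have "\<dots> \<subseteq> f (m *\<^sub>R y1 + (1 - m) *\<^sub>R y2)"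
    using assms unfolding set_convex_fun_def by blast
  finally show ?thesis .
qed

lemma mono_q:
  assumes cf: "set_convex_fun f" and "0 < s" "s \<le> t" and z: "z \<in> f (x + t *\<^sub>R u) \<ominus>\<^sub>G f x"
  shows "(s / t) *\<^sub>R z \<in> f (x + s *\<^sub>R u) \<ominus>\<^sub>G f x"
proof (cases "s = t")
  case True then show ?thesis using z assms by simp
next
  case False
  let ?m = "s / t"
  have m: "0 < ?m" "?m < 1" using assms False by auto
  show ?thesis unfolding ominus_def
  proof (intro CollectI ballI)
    fix b assume b: "b \<in> f x"
    have bz: "b + z \<in> f (x + t *\<^sub>R u)" using z b unfolding ominus_def by blast
    have "?m *\<^sub>R (b + z) + (1 - ?m) *\<^sub>R b \<in> f (?m *\<^sub>R (x + t *\<^sub>R u) + (1 - ?m) *\<^sub>R x)"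
      by (rule convex_comb_in[OF cf m bz b])
    moreover have "?m *\<^sub>R (b + z) + (1 - ?m) *\<^sub>R b = b + ?m *\<^sub>R z"
      by (simp add: algebra_simps)
    moreover have "?m *\<^sub>R (x + t *\<^sub>R u) + (1 - ?m) *\<^sub>R x = x + s *\<^sub>R u"
      using assms by (simp add: algebra_simps)
    ultimately show "b + ?m *\<^sub>R z \<in> f (x + s *\<^sub>R u)" by simp
  qed
qed

lemma Qd_mono:
  assumes cf: "set_convex_fun f" and "0 < s" "s \<le> t"
  shows "Qd f x t u \<subseteq> Qd f x s u"
proof
  fix q assume "q \<in> Qd f x t u"
  then obtain z where z: "z \<in> f (x + t *\<^sub>R u) \<ominus>\<^sub>G f x" "q = (1/t) *\<^sub>R z"
    by (auto simp: Qd_def sscale_def)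
  have "(s / t) *\<^sub>R z \<in> f (x + s *\<^sub>R u) \<ominus>\<^sub>G f x" by (rule mono_q[OF assms z(1)])
  moreover have "q = (1/s) *\<^sub>R ((s / t) *\<^sub>R z)" using z assms by simp
  ultimately show "q \<in> Qd f x s u" unfolding Qd_def sscale_def by blast
qed

lemma dd_eq:
  assumes cf: "set_convex_fun f"
  shows "dir_deriv f x u = closure (convex hull (\<Union>t\<in>{0<..}. Qd f x t u))"
proof -
  have "(\<Union>t\<in>{0<..<t0}. Qd f x t u) = (\<Union>t\<in>{0<..}. Qd f x t u)" if t0: "t0 > 0" for t0 :: real
  proof
    show "(\<Union>t\<in>{0<..}. Qd f x t u) \<subseteq> (\<Union>t\<in>{0<..<t0}. Qd f x t u)"
    proof (intro UN_least)
      fix t :: real assume t: "t \<in> {0<..}"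
      let ?s = "min t (t0/2)"
      have "Qd f x t u \<subseteq> Qd f x ?s u" using Qd_mono[OF cf, of ?s t] t t0 by simp
      moreover have "?s \<in> {0<..<t0}" using t t0 by auto
      ultimately show "Qd f x t u \<subseteq> (\<Union>t\<in>{0<..<t0}. Qd f x t u)" by blast
    qed
  qed auto
  then show ?thesis unfolding dir_deriv_def Qd_def[symmetric] by auto
qed

lemma recc_convex: "convex A \<Longrightarrow> convex (recc A)"
  unfolding recc_def
proof (rule convexI)
  fix z1 z2 and u v :: real
  assume A: "convex A" and z: "z1 \<in> {z. \<forall>a\<in>A. a + z \<in> A}" "z2 \<in> {z. \<forall>a\<in>A. a + z \<in> A}"
    and uv: "0 \<le> u" "0 \<le> v" "u + v = 1"
  show "u *\<^sub>R z1 + v *\<^sub>R z2 \<in> {z. \<forall>a\<in>A. a + z \<in> A}"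
  proof (intro CollectI ballI)
    fix a assume a: "a \<in> A"
    have "u *\<^sub>R (a + z1) + v *\<^sub>R (a + z2) \<in> A"
      using A z a uv unfolding convex_def by blast
    moreover have "u *\<^sub>R (a + z1) + v *\<^sub>R (a + z2) = a + (u *\<^sub>R z1 + v *\<^sub>R z2)"
      using uv by (simp add: algebra_simps flip: scaleR_add_left)
    ultimately show "a + (u *\<^sub>R z1 + v *\<^sub>R z2) \<in> A" by simp
  qed
qed

lemma recc_nat: "z \<in> recc A \<Longrightarrow> real n *\<^sub>R z \<in> recc A"
proof (induction n)
  case 0 then show ?case by (simp add: recc_def)
next
  case (Suc n)
  have e: "real (Suc n) *\<^sub>R z = real n *\<^sub>R z + z" by (simp add: scaleR_add_left)
  show ?case unfolding e recc_def
  proof (intro CollectI ballI)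
    fix a assume a: "a \<in> A"
    have "a + real n *\<^sub>R z \<in> A" using Suc a by (simp add: recc_def)
    then have "(a + real n *\<^sub>R z) + z \<in> A" using Suc.prems a by (simp add: recc_def)
    then show "a + (real n *\<^sub>R z + z) \<in> A" by (simp add: add.assoc)
  qed
qed

lemma recc_small: "convex A \<Longrightarrow> z \<in> recc A \<Longrightarrow> 0 \<le> c \<Longrightarrow> c \<le> 1 \<Longrightarrow> c *\<^sub>R z \<in> recc A"
  unfolding recc_def
proof (intro CollectI ballI)
  fix a assume A: "convex A" and z: "z \<in> {z. \<forall>a\<in>A. a + z \<in> A}" and c: "0 \<le> c" "c \<le> 1" and a: "a \<in> A"
  have "c *\<^sub>R (a + z) + (1 - c) *\<^sub>R a \<in> A" using A z a c unfolding convex_def by auto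
  moreover have "c *\<^sub>R (a + z) + (1 - c) *\<^sub>R a = a + c *\<^sub>R z" by (simp add: algebra_simps)
  ultimately show "a + c *\<^sub>R z \<in> A" by simp
qed

lemma recc_cone: "convex A \<Longrightarrow> z \<in> recc A \<Longrightarrow> 0 \<le> c \<Longrightarrow> c *\<^sub>R z \<in> recc A"
proof -
  assume A: "convex A" and z: "z \<in> recc A" and c: "0 \<le> c"
  obtain n :: nat where n: "c \<le> real n" "1 \<le> real n"
    using real_arch_simple[of "max c 1"] by auto
  have "(c / real n) *\<^sub>R (real n *\<^sub>R z) \<in> recc A"
    by (rule recc_small[OF A recc_nat[OF z]]) (use c n in auto)
  then show ?thesis using n by simp
qed

lemma recc_closed:
  fixes A :: "'z::lc_tvs set"
  assumes "closed A" shows "closed (recc A)"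
proof -
  have "closure (recc A) \<subseteq> recc A"
  proof
    fix z assume z: "z \<in> closure (recc A)"
    show "z \<in> recc A" unfolding recc_def
    proof (intro CollectI ballI)
      fix a assume a: "a \<in> A"
      have "{a + z' | z'. z' \<in> recc A} \<subseteq> A" using a by (auto simp: recc_def)
      then have "closure {a + z' | z'. z' \<in> recc A} \<subseteq> A" using assms closure_minimal by blast
      moreover have "z + a \<in> closure {z' + a | z'. z' \<in> recc A}" by (rule closure_translate_tvs[OF z])
      moreover have "{z' + a | z'. z' \<in> recc A} = {a + z' | z'. z' \<in> recc A}" by (auto simp: add.commute)
      ultimately have "z + a \<in> A" by auto
      then show "a + z \<in> A" by (simp add: add.commute)
    qed
  qed
  then show ?thesis using closure_subset_eq by blast
qed

lemma Gspace_props: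
  fixes A :: "'z::lc_tvs set"
  assumes "A \<in> Gspace K" shows "closed A" "convex A"
proof -
  have e: "A = closure (convex hull {a + k | a k. a \<in> A \<and> k \<in> K})" using assms by (simp add: Gspace_def)
  show "closed A" by (subst e) simp
  show "convex A" by (subst e) (simp add: closure_convex_tvs)
qed

lemma sscale_recc:
  assumes "convex A" "0 < c" shows "sscale c (recc A) = recc A"
proof
  show "sscale c (recc A) \<subseteq> recc A" using recc_cone[OF assms(1)] assms(2) by (auto simp: sscale_def)
  show "recc A \<subseteq> sscale c (recc A)"
  proof
    fix z assume z: "z \<in> recc A"
    have "(1/c) *\<^sub>R z \<in> recc A" using recc_cone[OF assms(1) z] assms(2) by simp
    moreover have "z = c *\<^sub>R ((1/c) *\<^sub>R z)" using assms(2) by simp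
    ultimately show "z \<in> sscale c (recc A)" unfolding sscale_def by blast
  qed
qed

lemma convex_affine_pre:
  assumes "convex T" shows "convex {c. a + r *\<^sub>R c \<in> T}"
proof (rule convexI)
  fix c c' and u v :: real assume c: "c \<in> {c. a + r *\<^sub>R c \<in> T}" "c' \<in> {c. a + r *\<^sub>R c \<in> T}"
    and uv: "0 \<le> u" "0 \<le> v" "u + v = 1"
  have "u *\<^sub>R (a + r *\<^sub>R c) + v *\<^sub>R (a + r *\<^sub>R c') \<in> T" using assms c uv unfolding convex_def by blast
  moreover have "u *\<^sub>R (a + r *\<^sub>R c) + v *\<^sub>R (a + r *\<^sub>R c') = a + r *\<^sub>R (u *\<^sub>R c + v *\<^sub>R c')"
  proof -
    have "u *\<^sub>R (a + r *\<^sub>R c) + v *\<^sub>R (a + r *\<^sub>R c') = (u + v) *\<^sub>R a + r *\<^sub>R (u *\<^sub>R c + v *\<^sub>R c')"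
      by (simp add: algebra_simps)
    then show ?thesis using uv by simp
  qed
  ultimately show "u *\<^sub>R c + v *\<^sub>R c' \<in> {c. a + r *\<^sub>R c \<in> T}" by simp
qed

lemma hull_comb:
  assumes "\<And>q1 q2. q1 \<in> P1 \<Longrightarrow> q2 \<in> P2 \<Longrightarrow> s *\<^sub>R q1 + (1 - s) *\<^sub>R q2 \<in> T" and "convex T"
    and c1: "c1 \<in> convex hull P1" and c2: "c2 \<in> convex hull P2"
  shows "s *\<^sub>R c1 + (1 - s) *\<^sub>R c2 \<in> T"
proof -
  have step1: "s *\<^sub>R q1 + (1 - s) *\<^sub>R c \<in> T" if q1: "q1 \<in> P1" and c: "c \<in> convex hull P2" for q1 c
  proof -
    have "convex hull P2 \<subseteq> {c. s *\<^sub>R q1 + (1 - s) *\<^sub>R c \<in> T}"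
      by (rule hull_minimal) (use assms(1) q1 convex_affine_pre[OF assms(2)] in auto)
    then show ?thesis using c by blast
  qed
  have "convex hull P1 \<subseteq> {c. (1 - s) *\<^sub>R c2 + s *\<^sub>R c \<in> T}"
  proof (rule hull_minimal)
    show "P1 \<subseteq> {c. (1 - s) *\<^sub>R c2 + s *\<^sub>R c \<in> T}" using step1 c2 by (auto simp: add.commute)
    show "convex {c. (1 - s) *\<^sub>R c2 + s *\<^sub>R c \<in> T}" by (rule convex_affine_pre[OF assms(2)])
  qed
  then show ?thesis using c1 by (auto simp: add.commute)
qed

theorem mainTheorem8:
  fixes f :: "'x::real_vector \<Rightarrow> 'z::lc_tvs set"
    and C :: "'z set" and x :: 'x
  assumes "closed C" and "convex C" and "cone C" and "0 \<in> C"
    and "neg_dual_cone C \<noteq> {\<lambda>z. 0}"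
    and "\<forall>y. f y \<in> Gspace C"
    and "set_convex_fun f"
    and "x \<in> sdom f"
  shows "(\<forall>u. dir_deriv f x u = closure (convex hull
            (\<Union>t\<in>{0<..}. sscale (1 / t) (f (x + t *\<^sub>R u) \<ominus>\<^sub>G f x))))
    \<and> dir_deriv f x 0 = recc (f x)
    \<and> (\<forall>u. dir_deriv f x u \<in> Gspace (recc (f x)))
    \<and> (\<forall>s u. 0 < s \<longrightarrow> dir_deriv f x (s *\<^sub>R u) = sscale s (dir_deriv f x u))
    \<and> (\<forall>s u1 u2. 0 < s \<and> s < 1 \<longrightarrow>
         sscale s (dir_deriv f x u1) \<oplus>\<^sub>G sscale (1 - s) (dir_deriv f x u2)
           \<subseteq> dir_deriv f x (s *\<^sub>R u1 + (1 - s) *\<^sub>R u2))"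
proof -
  note cf = assms(7)
  let ?A = "f x"
  let ?K = "recc (f x)"
  define QA where "QA u = (\<Union>t\<in>{0<..}. Qd f x t u)" for u
  have D: "dir_deriv f x u = closure (convex hull (QA u))" for u
    unfolding QA_def by (rule dd_eq[OF cf])
  have Aconv: "convex ?A" and Acl: "closed ?A" using Gspace_props assms(6) by blast+
  have Kconv: "convex ?K" by (rule recc_convex[OF Aconv])
  have Kcl: "closed ?K" by (rule recc_closed[OF Acl])
  have K0: "0 \<in> ?K" by (simp add: recc_def)
  have oo: "?A \<ominus>\<^sub>G ?A = ?K" by (simp add: ominus_def recc_def)
  have P1: "\<forall>u. dir_deriv f x u = closure (convex hull
            (\<Union>t\<in>{0<..}. sscale (1 / t) (f (x + t *\<^sub>R u) \<ominus>\<^sub>G f x)))"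
    using D unfolding QA_def Qd_def by simp
  have "QA 0 = ?K" unfolding QA_def Qd_def using sscale_recc[OF Aconv] by (simp add: oo)
  moreover have "convex hull ?K = ?K" using Kconv by (simp add: convex_hull_eq)
  ultimately have P2: "dir_deriv f x 0 = ?K" using D[of 0] Kcl by simp
  have P3: "dir_deriv f x u \<in> Gspace ?K" for u
  proof -
    have QK: "k + q \<in> QA u" if k: "k \<in> ?K" and q: "q \<in> QA u" for k q
    proof -
      obtain t z where t: "t > 0" and z: "z \<in> f (x + t *\<^sub>R u) \<ominus>\<^sub>G f x" and qz: "q = (1/t) *\<^sub>R z"
        using q unfolding QA_def Qd_def sscale_def by auto
      have tk: "t *\<^sub>R k \<in> ?K" using recc_cone[OF Aconv k] t by simp
      have "z + t *\<^sub>R k \<in> f (x + t *\<^sub>R u) \<ominus>\<^sub>G f x" unfolding ominus_def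
      proof (intro CollectI ballI)
        fix b assume b: "b \<in> f x"
        have "b + t *\<^sub>R k \<in> f x" using tk b by (simp add: recc_def)
        then have "(b + t *\<^sub>R k) + z \<in> f (x + t *\<^sub>R u)" using z by (simp add: ominus_def)
        then show "b + (z + t *\<^sub>R k) \<in> f (x + t *\<^sub>R u)" by (simp add: algebra_simps)
      qed
      moreover have "k + q = (1/t) *\<^sub>R (z + t *\<^sub>R k)" using t qz by (simp add: algebra_simps)
      ultimately show ?thesis using t unfolding QA_def Qd_def sscale_def by blast
    qed
    let ?D = "dir_deriv f x u"
    have Dconv: "convex ?D" unfolding D by (simp add: closure_convex_tvs)
    have Dcl: "closed ?D" unfolding D by simp
    have DK: "{a + k | a k. a \<in> ?D \<and> k \<in> ?K} = ?D"
    proof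
      show "?D \<subseteq> {a + k | a k. a \<in> ?D \<and> k \<in> ?K}" using K0 by force
      show "{a + k | a k. a \<in> ?D \<and> k \<in> ?K} \<subseteq> ?D"
      proof clarify
        fix d k assume d: "d \<in> ?D" and k: "k \<in> ?K"
        have sub: "{c + k | c. c \<in> convex hull (QA u)} \<subseteq> convex hull (QA u)"
        proof clarify
          fix c assume c: "c \<in> convex hull (QA u)"
          have "k + c \<in> (\<lambda>y. k + y) ` (convex hull (QA u))" using c by blast
          also have "\<dots> = convex hull ((\<lambda>y. k + y) ` QA u)" by (rule convex_hull_translation[symmetric])
          also have "\<dots> \<subseteq> convex hull (QA u)" by (rule hull_mono) (use QK k in auto)
          finally show "c + k \<in> convex hull (QA u)" by (simp add: add.commute)
        qed
        have "d + k \<in> closure {c + k | c. c \<in> convex hull (QA u)}"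
          using closure_translate_tvs d unfolding D by blast
        also have "\<dots> \<subseteq> ?D" unfolding D by (rule closure_mono[OF sub])
        finally show "d + k \<in> ?D" .
      qed
    qed
    have "convex hull ?D = ?D" using Dconv by (simp add: convex_hull_eq)
    then show ?thesis unfolding Gspace_def using DK Dcl by simp
  qed
  have P4: "dir_deriv f x (s *\<^sub>R u) = sscale s (dir_deriv f x u)" if s: "0 < s" for s u
  proof -
    have Qs: "Qd f x t (s *\<^sub>R u) = sscale s (Qd f x (t * s) u)" if "t > 0" for t
      using s that by (auto simp: Qd_def sscale_def image_image algebra_simps)
    have "QA (s *\<^sub>R u) = sscale s (QA u)"
    proof
      show "QA (s *\<^sub>R u) \<subseteq> sscale s (QA u)"
        unfolding QA_def using Qs s by (force simp: sscale_def)
      show "sscale s (QA u) \<subseteq> QA (s *\<^sub>R u)"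
      proof
        fix y assume "y \<in> sscale s (QA u)"
        then obtain r q where r: "r > 0" "q \<in> Qd f x r u" "y = s *\<^sub>R q" unfolding QA_def sscale_def by auto
        have "y \<in> Qd f x (r / s) (s *\<^sub>R u)" using Qs[of "r/s"] r s by (auto simp: sscale_def)
        then show "y \<in> QA (s *\<^sub>R u)" unfolding QA_def using r s by auto
      qed
    qed
    then show ?thesis unfolding D using s by (simp add: hull_sscale closure_scale_tvs)
  qed
  have P5: "sscale s (dir_deriv f x u1) \<oplus>\<^sub>G sscale (1 - s) (dir_deriv f x u2)
           \<subseteq> dir_deriv f x (s *\<^sub>R u1 + (1 - s) *\<^sub>R u2)" if s: "0 < s" "s < 1" for s u1 u2
  proof -
    let ?w = "s *\<^sub>R u1 + (1 - s) *\<^sub>R u2"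
    have a: "s *\<^sub>R q1 + (1 - s) *\<^sub>R q2 \<in> QA ?w" if q1: "q1 \<in> QA u1" and q2: "q2 \<in> QA u2" for q1 q2
    proof -
      obtain t1 where t1: "t1 > 0" "q1 \<in> Qd f x t1 u1" using q1 unfolding QA_def by auto
      obtain t2 where t2: "t2 > 0" "q2 \<in> Qd f x t2 u2" using q2 unfolding QA_def by auto
      define t where "t = min t1 t2"
      have t: "t > 0" using t1 t2 by (simp add: t_def)
      have "q1 \<in> Qd f x t u1" using Qd_mono[OF cf t, of t1] t1 by (auto simp: t_def)
      then obtain z1 where z1: "z1 \<in> f (x + t *\<^sub>R u1) \<ominus>\<^sub>G f x" "q1 = (1/t) *\<^sub>R z1"
        by (auto simp: Qd_def sscale_def)
      have "q2 \<in> Qd f x t u2" using Qd_mono[OF cf t, of t2] t2 by (auto simp: t_def)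
      then obtain z2 where z2: "z2 \<in> f (x + t *\<^sub>R u2) \<ominus>\<^sub>G f x" "q2 = (1/t) *\<^sub>R z2"
        by (auto simp: Qd_def sscale_def)
      have "s *\<^sub>R z1 + (1 - s) *\<^sub>R z2 \<in> f (x + t *\<^sub>R ?w) \<ominus>\<^sub>G f x" unfolding ominus_def
      proof (intro CollectI ballI)
        fix b assume b: "b \<in> f x"
        have "b + z1 \<in> f (x + t *\<^sub>R u1)" "b + z2 \<in> f (x + t *\<^sub>R u2)"
          using z1 z2 b unfolding ominus_def by blast+
        from convex_comb_in[OF cf s this]
        have "s *\<^sub>R (b + z1) + (1 - s) *\<^sub>R (b + z2) \<in> f (s *\<^sub>R (x + t *\<^sub>R u1) + (1 - s) *\<^sub>R (x + t *\<^sub>R u2))" .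
        moreover have "s *\<^sub>R (b + z1) + (1 - s) *\<^sub>R (b + z2) = b + (s *\<^sub>R z1 + (1 - s) *\<^sub>R z2)"
          by (simp add: algebra_simps)
        moreover have "s *\<^sub>R (x + t *\<^sub>R u1) + (1 - s) *\<^sub>R (x + t *\<^sub>R u2) = x + t *\<^sub>R ?w"
          by (simp add: algebra_simps)
        ultimately show "b + (s *\<^sub>R z1 + (1 - s) *\<^sub>R z2) \<in> f (x + t *\<^sub>R ?w)" by simp
      qed
      moreover have "s *\<^sub>R q1 + (1 - s) *\<^sub>R q2 = (1/t) *\<^sub>R (s *\<^sub>R z1 + (1 - s) *\<^sub>R z2)"
        unfolding z1(2) z2(2) by (simp add: scaleR_add_right ac_simps)
      ultimately show ?thesis using t unfolding QA_def Qd_def sscale_def by blast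
    qed
    have bsub: "{s *\<^sub>R c1 + (1 - s) *\<^sub>R c2 | c1 c2. c1 \<in> convex hull QA u1 \<and> c2 \<in> convex hull QA u2}
        \<subseteq> convex hull QA ?w"
    proof clarify
      fix c1 c2 assume c1: "c1 \<in> convex hull QA u1" and c2: "c2 \<in> convex hull QA u2"
      show "s *\<^sub>R c1 + (1 - s) *\<^sub>R c2 \<in> convex hull QA ?w"
      proof (rule hull_comb[OF _ convex_convex_hull c1 c2])
        fix q1 q2 assume "q1 \<in> QA u1" "q2 \<in> QA u2"
        then have "s *\<^sub>R q1 + (1 - s) *\<^sub>R q2 \<in> QA ?w" by (rule a)
        then show "s *\<^sub>R q1 + (1 - s) *\<^sub>R q2 \<in> convex hull QA ?w" by (rule hull_inc)
      qed
    qed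
    have c: "{a + b | a b. a \<in> sscale s (dir_deriv f x u1) \<and> b \<in> sscale (1 - s) (dir_deriv f x u2)}
        \<subseteq> dir_deriv f x ?w"
    proof clarify
      fix a b assume a: "a \<in> sscale s (dir_deriv f x u1)" and b: "b \<in> sscale (1 - s) (dir_deriv f x u2)"
      obtain d1 where d1: "d1 \<in> closure (convex hull QA u1)" "a = s *\<^sub>R d1" using a D unfolding sscale_def by auto
      obtain d2 where d2: "d2 \<in> closure (convex hull QA u2)" "b = (1 - s) *\<^sub>R d2" using b D unfolding sscale_def by auto
      have "a + b \<in> closure {s *\<^sub>R c1 + (1 - s) *\<^sub>R c2 | c1 c2. c1 \<in> convex hull QA u1 \<and> c2 \<in> convex hull QA u2}"
        using closure_lin2[OF d1(1) d2(1), of s "1 - s"] d1 d2 by simp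
      also have "\<dots> \<subseteq> dir_deriv f x ?w" unfolding D by (rule closure_mono[OF bsub])
      finally show "a + b \<in> dir_deriv f x ?w" .
    qed
    show ?thesis unfolding oplus_def by (rule closure_minimal[OF c]) (simp add: D)
  qed
  show ?thesis using P1 P2 P3 P4 P5 by blast
qed

end
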